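(* Let $(\mathcal Q,d)$ be a Hadamard space, $Y$ a $\mathcal Q$-valued random variable and $o\in\mathcal Q$; consider the Fréchet median set $M:=\arg\min_{q\in\mathcal Q}\mathbb E[d(Y,q)-d(Y,o)]$. (i) Suppose there is no Borel set $U\subset\mathcal Q$ with $\mathbb P(Y\in U)=1$ that is contained in the union of the images of a family of geodesics all of whose images contain a common geodesic segment of positive length. Then $M$ consists of exactly one point. (ii) Suppose moreover that $(\mathcal Q,d)$ is non-branching and that there is no geodesic $\gamma$ with $\mathbb P(Y\in\gamma(I_\gamma))=1$. Then $M$ consists of exactly one point.
   Context: A Hadamard space is a complete metric space $(\mathcal Q,d)$ such that for all $y_0,y_1$ there is $m$ with $\frac12 d(y_0,q)^2+\frac12 d(y_1,q)^2-\frac14 d(y_0,y_1)^2\ge d(q,m)^2$ for all $q$. A geodesic is a map $\gamma:I_\gamma\to\mathcal Q$ on an interval with $d(\gamma(r),\gamma(t))=d(\gamma(r),\gamma(s))+d(\gamma(s),\gamma(t))$ for $r<s<t$; a geodesic segment is a closed bounded set that is the image of a geodesic. A geodesic space is non-branching if whenever $y,p,q\in\mathcal Q$ and unit-speed geodesics $\gamma_{y\to p},\gamma_{y\to q}$ from $y$ to $p$ and from $y$ to $q$ satisfy $\gamma_{y\to p}(d(y,p)/2)=\gamma_{y\to q}(d(y,q)/2)$, then $p=q$. *)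

theory Defs
  imports "HOL-Probability.Probability"
begin

text \<open>Hadamard space condition (completeness is provided by the type class complete_space).\<close>
definition hadamard :: "'a::complete_space itself \<Rightarrow> bool" where
  "hadamard _ \<longleftrightarrow> (\<forall>y0 y1::'a. \<exists>m. \<forall>q.
      (1/2) * (dist y0 q)\<^sup>2 + (1/2) * (dist y1 q)\<^sup>2 - (1/4) * (dist y0 y1)\<^sup>2 \<ge> (dist q m)\<^sup>2)"

definition geodesic :: "real set \<Rightarrow> (real \<Rightarrow> 'a::metric_space) \<Rightarrow> bool" where
  "geodesic I \<gamma> \<longleftrightarrow> is_interval I \<and>
     (\<forall>r\<in>I. \<forall>s\<in>I. \<forall>t\<in>I. r < s \<and> s < t \<longrightarrow>
        dist (\<gamma> r) (\<gamma> t) = dist (\<gamma> r) (\<gamma> s) + dist (\<gamma> s) (\<gamma> t))"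

definition geodesic_segment :: "'a::metric_space set \<Rightarrow> bool" where
  "geodesic_segment S \<longleftrightarrow> closed S \<and> bounded S \<and> (\<exists>I \<gamma>. geodesic I \<gamma> \<and> S = \<gamma> ` I)"

definition unit_geodesic_from_to :: "(real \<Rightarrow> 'a::metric_space) \<Rightarrow> 'a \<Rightarrow> 'a \<Rightarrow> bool" where
  "unit_geodesic_from_to \<gamma> y p \<longleftrightarrow> \<gamma> 0 = y \<and> \<gamma> (dist y p) = p \<and>
     (\<forall>s\<in>{0..dist y p}. \<forall>t\<in>{0..dist y p}. dist (\<gamma> s) (\<gamma> t) = \<bar>s - t\<bar>)"

definition non_branching :: "'a::metric_space itself \<Rightarrow> bool" where
  "non_branching _ \<longleftrightarrow> (\<forall>(y::'a) p q \<gamma>1 \<gamma>2.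
      unit_geodesic_from_to \<gamma>1 y p \<and> unit_geodesic_from_to \<gamma>2 y q \<and>
      \<gamma>1 (dist y p / 2) = \<gamma>2 (dist y q / 2) \<longrightarrow> p = q)"

definition frechet_median_set :: "'m measure \<Rightarrow> ('m \<Rightarrow> 'a::metric_space) \<Rightarrow> 'a \<Rightarrow> 'a set" where
  "frechet_median_set P Y x0 = {q. \<forall>p.
      prob_space.expectation P (\<lambda>\<omega>. dist (Y \<omega>) q - dist (Y \<omega>) x0)
      \<le> prob_space.expectation P (\<lambda>\<omega>. dist (Y \<omega>) p - dist (Y \<omega>) x0)}"

end

theory Submission
  imports Defs
begin

definition mid :: "'a::metric_space \<Rightarrow> 'a \<Rightarrow> 'a" where
  "mid x y = (SOME m. \<forall>q. (1/2) * (dist x q)\<^sup>2 + (1/2) * (dist y q)\<^sup>2 - (1/4) * (dist x y)\<^sup>2 \<ge> (dist q m)\<^sup>2)"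

context
  assumes H: "hadamard TYPE('a::complete_space)"
begin

lemma mid_ineq: "(dist q (mid x y))\<^sup>2 \<le> (1/2) * (dist x q)\<^sup>2 + (1/2) * (dist y q)\<^sup>2 - (1/4) * (dist x y)\<^sup>2"
  for x y q :: 'a
proof -
  from H obtain m :: 'a where "\<forall>q. (1/2) * (dist x q)\<^sup>2 + (1/2) * (dist y q)\<^sup>2 - (1/4) * (dist x y)\<^sup>2 \<ge> (dist q m)\<^sup>2"
    unfolding hadamard_def by blast
  then have "\<forall>q. (1/2) * (dist x q)\<^sup>2 + (1/2) * (dist y q)\<^sup>2 - (1/4) * (dist x y)\<^sup>2 \<ge> (dist q (mid x y))\<^sup>2"
    unfolding mid_def by (rule someI)
  then show ?thesis by blast
qed

lemma mid_conv: "dist q (mid x y) \<le> (dist q x + dist q y) / 2"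
  for x y q :: 'a
proof -
  have 1: "(dist q (mid x y))\<^sup>2 \<le> (1/2) * (dist x q)\<^sup>2 + (1/2) * (dist y q)\<^sup>2 - (1/4) * (dist x y)\<^sup>2"
    by (rule mid_ineq)
  have 2: "\<bar>dist x q - dist y q\<bar> \<le> dist x y"
    by (metis abs_le_iff dist_commute dist_triangle2 dist_triangle3 minus_diff_eq diff_le_eq) 
  have 3: "(dist x q - dist y q)\<^sup>2 \<le> (dist x y)\<^sup>2"
    using 2 by (metis abs_ge_zero power2_abs power_mono)
  have "(dist q (mid x y))\<^sup>2 \<le> ((dist q x + dist q y) / 2)\<^sup>2"
    using 1 3 by (simp add: dist_commute power2_eq_square field_simps)
  then show ?thesis
    by (rule power2_le_imp_le) simp
qed

lemma mid_dist1: "dist x (mid x y) = dist x y / 2" for x y :: 'a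
proof -
  have a: "dist x (mid x y) \<le> dist x y / 2" using mid_conv[of x x y] by simp
  have b: "dist y (mid x y) \<le> dist x y / 2" using mid_conv[of y x y] by (simp add: dist_commute)
  have "dist x y \<le> dist x (mid x y) + dist y (mid x y)" by (metis dist_commute dist_triangle)
  with a b show ?thesis by linarith
qed

lemma mid_dist2: "dist (mid x y) y = dist x y / 2" for x y :: 'a
proof -
  have a: "dist x (mid x y) \<le> dist x y / 2" using mid_conv[of x x y] by simp
  have b: "dist y (mid x y) \<le> dist x y / 2" using mid_conv[of y x y] by (simp add: dist_commute)
  have "dist x y \<le> dist x (mid x y) + dist y (mid x y)" by (metis dist_commute dist_triangle)
  with a b show ?thesis by (simp add: dist_commute)
qed

lemma min_exists:
  fixes f :: "'a \<Rightarrow> real" and c0 :: 'a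
  assumes cont: "continuous_on UNIV f"
    and qc: "\<And>a b. f (mid a b) \<le> max (f a) (f b)"
    and lb: "\<And>z. L \<le> f z"
    and bd: "\<And>K. \<exists>B. \<forall>z. f z \<le> K \<longrightarrow> dist c0 z \<le> B"
  shows "\<exists>z. \<forall>q. f z \<le> f q"
proof -
  define m where "m = Inf (range f)"
  have bb: "bdd_below (range f)" using lb by (intro bdd_belowI[of _ L]) auto
  have mle: "m \<le> f z" for z unfolding m_def using bb by (auto intro: cInf_lower)
  define C where "C n = {z. f z \<le> m + inverse (real (Suc n))}" for n
  have Cne: "C n \<noteq> {}" for n
  proof -
    have "Inf (range f) < m + inverse (real (Suc n))" unfolding m_def by simp
    then obtain x where "x \<in> range f" "x < m + inverse (real (Suc n))"
      using cInf_lessD[of "range f"] by blast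
    then show ?thesis unfolding C_def by (auto intro: less_imp_le)
  qed
  have Cmono: "n \<le> k \<Longrightarrow> C k \<subseteq> C n" for n k
  proof -
    assume "n \<le> k"
    then have "inverse (real (Suc k)) \<le> inverse (real (Suc n))"
      by (simp add: le_imp_inverse_le)
    then show ?thesis unfolding C_def
    proof (intro subsetI)
      fix x assume a: "inverse (real (Suc k)) \<le> inverse (real (Suc n))"
        and "x \<in> {z. f z \<le> m + inverse (real (Suc k))}"
      then have "f x \<le> m + inverse (real (Suc k))" by blast
      with a have "f x \<le> m + inverse (real (Suc n))" by linarith
      then show "x \<in> {z. f z \<le> m + inverse (real (Suc n))}" by blast
    qed
  qed
  define r where "r n = Inf ((\<lambda>z. (dist c0 z)\<^sup>2) ` C n)" for n
  have bbr: "bdd_below ((\<lambda>z. (dist c0 z)\<^sup>2) ` C n)" for n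
    by (rule bdd_belowI[of _ 0]) auto
  have rle: "z \<in> C n \<Longrightarrow> r n \<le> (dist c0 z)\<^sup>2" for z n
    unfolding r_def using bbr by (auto intro: cInf_lower)
  have rinc: "incseq r"
  proof (rule incseq_SucI)
    fix n
    show "r n \<le> r (Suc n)" unfolding r_def
      using Cne[of "Suc n"] Cmono[of n "Suc n"] bbr[of n]
      by (intro cInf_superset_mono) auto
  qed
  obtain B where B: "\<forall>z. f z \<le> m + 1 \<longrightarrow> dist c0 z \<le> B" using bd by blast
  have rB: "r n \<le> B\<^sup>2" for n
  proof -
    obtain z where z: "z \<in> C n" using Cne by blast
    have "inverse (real (Suc n)) \<le> 1" by (simp add: inverse_le_1_iff)
    with z have "f z \<le> m + 1" unfolding C_def by simp
    then have "dist c0 z \<le> B" using B by blast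
    then have "(dist c0 z)\<^sup>2 \<le> B\<^sup>2" by (simp add: power_mono)
    with rle[OF z] show ?thesis by linarith
  qed
  define R where "R = Sup (range r)"
  have rR: "r \<longlonglongrightarrow> R" unfolding R_def
    using rinc rB by (intro LIMSEQ_incseq_SUP) (auto intro: bdd_aboveI[of _ "B\<^sup>2"])
  have rleR: "r n \<le> R" for n using rinc rR by (rule incseq_le)
  have ex: "\<exists>z. z \<in> C n \<and> (dist c0 z)\<^sup>2 < r n + inverse (real (Suc n))" for n
  proof -
    have lt: "Inf ((\<lambda>z. (dist c0 z)\<^sup>2) ` C n) < r n + inverse (real (Suc n))" unfolding r_def by simp
    have ne: "(\<lambda>z. (dist c0 z)\<^sup>2) ` C n \<noteq> {}" using Cne by simp
    obtain x where x1: "x \<in> (\<lambda>z. (dist c0 z)\<^sup>2) ` C n" and x2: "x < r n + inverse (real (Suc n))"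
      using cInf_lessD[OF ne lt] by blast
    from x1 obtain z where "z \<in> C n" "x = (dist c0 z)\<^sup>2" by blast
    with x2 show ?thesis by blast
  qed
  obtain z where zz: "\<forall>n. z n \<in> C n \<and> (dist c0 (z n))\<^sup>2 < r n + inverse (real (Suc n))"
    using choice[of "\<lambda>n z. z \<in> C n \<and> (dist c0 z)\<^sup>2 < r n + inverse (real (Suc n))"] ex by blast
  then have zC: "\<And>n. z n \<in> C n" and zd: "\<And>n. (dist c0 (z n))\<^sup>2 < r n + inverse (real (Suc n))"
    by auto
  have "Cauchy z"
    unfolding Cauchy_def
  proof (intro allI impI)
    fix e :: real assume e: "e > 0"
    define d where "d = e\<^sup>2 / 8"
    have d: "d > 0" using e by (simp add: d_def)
    obtain N1 where N1: "\<forall>n\<ge>N1. dist (r n) R < d"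
      using rR d unfolding lim_sequentially by blast
    obtain N2 where N2: "N2 > 0" "inverse (real N2) < d"
      using ex_inverse_of_nat_less[OF d] by blast
    define N where "N = max N1 N2"
    have invN: "inverse (real (Suc N)) < d"
    proof -
      have "inverse (real (Suc N)) \<le> inverse (real N2)"
        using N2(1) by (intro le_imp_inverse_le) (auto simp: N_def)
      then show ?thesis using N2(2) by linarith
    qed
    have "\<bar>r N - R\<bar> < d" using N1 unfolding N_def dist_real_def by simp
    then have rN: "R - r N < d" by linarith
    show "\<exists>M. \<forall>n\<ge>M. \<forall>k\<ge>M. dist (z n) (z k) < e"
    proof (intro exI allI impI)
      fix n k assume n: "N \<le> n" and k: "N \<le> k"
      define w where "w = mid (z n) (z k)"
      have "z n \<in> C N" "z k \<in> C N" using zC Cmono n k by blast+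
      then have "f w \<le> m + inverse (real (Suc N))"
        unfolding w_def C_def using qc[of "z n" "z k"] by auto
      then have "w \<in> C N" unfolding C_def by simp
      then have w1: "r N \<le> (dist c0 w)\<^sup>2" by (rule rle)
      have w2: "(dist c0 w)\<^sup>2 \<le> (1/2) * (dist (z n) c0)\<^sup>2 + (1/2) * (dist (z k) c0)\<^sup>2 - (1/4) * (dist (z n) (z k))\<^sup>2"
        unfolding w_def by (rule mid_ineq)
      have i1: "inverse (real (Suc n)) \<le> inverse (real (Suc N))"
        using n by (intro le_imp_inverse_le) auto
      have i2: "inverse (real (Suc k)) \<le> inverse (real (Suc N))"
        using k by (intro le_imp_inverse_le) auto
      have "(dist (z n) c0)\<^sup>2 < R + inverse (real (Suc N))"
        unfolding dist_commute[of "z n" c0] using zd[of n] rleR[of n] i1 by linarith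
      moreover have "(dist (z k) c0)\<^sup>2 < R + inverse (real (Suc N))"
        unfolding dist_commute[of "z k" c0] using zd[of k] rleR[of k] i2 by linarith
      ultimately have "(dist (z n) (z k))\<^sup>2 < 4 * (R - r N + inverse (real (Suc N)))"
        using w1 w2 by argo
      also have "\<dots> < 4 * (2 * d)" using rN invN by argo
      also have "\<dots> = e\<^sup>2" by (simp add: d_def)
      finally have "(dist (z n) (z k))\<^sup>2 < e\<^sup>2" .
      then show "dist (z n) (z k) < e" using e by (simp add: power_less_imp_less_base)
    qed
  qed
  then obtain zs where zs: "z \<longlonglongrightarrow> zs" using Cauchy_convergent convergent_def by blast
  have fz: "(\<lambda>n. f (z n)) \<longlonglongrightarrow> f zs"
    using cont zs by (intro isCont_tendsto_compose[of zs f]) (auto simp: continuous_on_eq_continuous_at)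
  have "(\<lambda>n. m + inverse (real (Suc n))) \<longlonglongrightarrow> m + 0"
    by (intro tendsto_add tendsto_const LIMSEQ_inverse_real_of_nat)
  then have "f zs \<le> m"
    using fz zC unfolding C_def by (intro LIMSEQ_le[OF fz]) auto
  then show ?thesis using mle by (metis order_trans)
qed

end

context
  assumes H: "hadamard TYPE('a::complete_space)"
begin

lemma bp_unique:
  fixes x y z z' :: 'a
  assumes "dist x z = s" "dist z y = dist x y - s" "dist x z' = s" "dist z' y = dist x y - s"
  shows "z = z'"
proof (rule ccontr)
  assume ne: "z \<noteq> z'"
  define w where "w = mid z z'"
  define \<delta> where "\<delta> = dist z z'"
  define t where "t = dist x y - s"
  have dpos: "\<delta> > 0" using ne by (simp add: \<delta>_def)
  have s0: "s \<ge> 0" using assms(1) by auto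
  have t0: "t \<ge> 0" using assms(2) t_def zero_le_dist[of z y] by linarith
  have u: "(dist x w)\<^sup>2 \<le> s\<^sup>2 - \<delta>\<^sup>2/4"
    using mid_ineq[OF H, of x z z'] assms by (simp add: w_def \<delta>_def dist_commute)
  have v: "(dist y w)\<^sup>2 \<le> t\<^sup>2 - \<delta>\<^sup>2/4"
    using mid_ineq[OF H, of y z z'] assms by (simp add: w_def \<delta>_def t_def dist_commute)
  have d2: "\<delta>\<^sup>2 > 0" using dpos by simp
  have "(dist x w)\<^sup>2 < s\<^sup>2" using u d2 by linarith
  then have "dist x w < s" using s0 by (rule power_less_imp_less_base)
  moreover have "(dist y w)\<^sup>2 < t\<^sup>2" using v d2 by linarith
  then have "dist y w < t" using t0 by (rule power_less_imp_less_base)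
  moreover have "dist x y \<le> dist x w + dist y w" by (metis dist_commute dist_triangle)
  ultimately show False unfolding t_def by linarith
qed

lemma dyad:
  fixes x y :: 'a
  shows "k \<le> 2^n \<Longrightarrow> \<exists>z. dist x z = real k / 2^n * dist x y \<and> dist z y = (1 - real k / 2^n) * dist x y"
proof (induction n arbitrary: x y k)
  case 0
  then have "k = 0 \<or> k = 1" by auto
  then show ?case
  proof
    assume "k = 0" then show ?thesis by (intro exI[of _ x]) simp
  next
    assume "k = 1" then show ?thesis by (intro exI[of _ y]) simp
  qed
next
  case (Suc n)
  define m where "m = mid x y"
  define D where "D = dist x y"
  have m1: "dist x m = D/2" unfolding m_def D_def by (rule mid_dist1[OF H])
  have m2: "dist m y = D/2" unfolding m_def D_def by (rule mid_dist2[OF H])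
  have p: "(2::real)^Suc n = 2 * 2^n" by simp
  show ?case
  proof (cases "k \<le> 2^n")
    case True
    have "\<exists>z. dist x z = real k / 2^n * dist x m \<and> dist z m = (1 - real k / 2^n) * dist x m"
      by (rule Suc.IH[OF True])
    then obtain z where z1': "dist x z = real k / 2^n * dist x m" and z2': "dist z m = (1 - real k / 2^n) * dist x m"
      by blast
    have z1: "dist x z = real k / 2^n * (D/2)" using z1' m1 by simp
    have z2: "dist z m = (1 - real k / 2^n) * (D/2)" using z2' m1 by simp
    have a: "dist x z = real k / 2^Suc n * D" using z1 by (simp add: p field_simps)
    have "dist z y \<le> dist z m + dist m y" by (rule dist_triangle)
    then have b1: "dist z y \<le> (1 - real k / 2^Suc n) * D" using z2 m2 by (simp add: p field_simps)
    have "D \<le> dist x z + dist z y" unfolding D_def by (rule dist_triangle)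
    then have b2: "dist z y \<ge> (1 - real k / 2^Suc n) * D" using a by (simp add: algebra_simps)
    show ?thesis using a b1 b2 by (intro exI[of _ z]) (simp add: D_def)
  next
    case False
    define k' where "k' = k - 2^n"
    have k': "k' \<le> 2^n" using Suc.prems False by (simp add: k'_def)
    have kk: "real k = real k' + 2^n" using False by (simp add: k'_def)
    have "\<exists>z. dist m z = real k' / 2^n * dist m y \<and> dist z y = (1 - real k' / 2^n) * dist m y"
      by (rule Suc.IH[OF k'])
    then obtain z where z1': "dist m z = real k' / 2^n * dist m y" and z2': "dist z y = (1 - real k' / 2^n) * dist m y"
      by blast
    have z1: "dist m z = real k' / 2^n * (D/2)" using z1' m2 by simp
    have z2: "dist z y = (1 - real k' / 2^n) * (D/2)" using z2' m2 by simp
    have b: "dist z y = (1 - real k / 2^Suc n) * D" using z2 kk by (simp add: p field_simps)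
    have "dist x z \<le> dist x m + dist m z" by (rule dist_triangle)
    then have a1: "dist x z \<le> real k / 2^Suc n * D" using z1 m1 kk by (simp add: p field_simps)
    have "D \<le> dist x z + dist z y" unfolding D_def by (rule dist_triangle)
    then have a2: "dist x z \<ge> real k / 2^Suc n * D" using b by (simp add: algebra_simps)
    show ?thesis using b a1 a2 by (intro exI[of _ z]) (simp add: D_def)
  qed
qed

lemma bp_exists:
  fixes x y :: 'a
  assumes s0: "0 \<le> s" and sD: "s \<le> dist x y"
  shows "\<exists>z. dist x z = s \<and> dist z y = dist x y - s"
proof -
  define D where "D = dist x y"
  consider "s = 0" | "s = D" | "0 < s \<and> s < D" using s0 sD D_def by linarith
  then show ?thesis
  proof cases
    case 1 then show ?thesis by (intro exI[of _ x]) simp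
  next
    case 2 then show ?thesis by (intro exI[of _ y]) (simp add: D_def)
  next
    case 3
    then have sl: "0 < s" and su: "s < D" by auto
    have Dp: "D > 0" using 3 by linarith
    define t where "t = s / D"
    have t0: "0 < t" and t1: "t < 1" using sl su Dp by (auto simp: t_def)
    define h where "h z = t * (dist y z)\<^sup>2 + (1 - t) * (dist x z)\<^sup>2" for z
    have cont: "continuous_on UNIV h" unfolding h_def by (intro continuous_intros)
    have qc: "h (mid a b) \<le> max (h a) (h b)" for a b
    proof -
      have 1: "(dist y (mid a b))\<^sup>2 \<le> (1/2) * (dist a y)\<^sup>2 + (1/2) * (dist b y)\<^sup>2"
        using mid_ineq[OF H, of y a b] zero_le_power2[of "dist a b"] by linarith
      have 2: "(dist x (mid a b))\<^sup>2 \<le> (1/2) * (dist a x)\<^sup>2 + (1/2) * (dist b x)\<^sup>2"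
        using mid_ineq[OF H, of x a b] zero_le_power2[of "dist a b"] by linarith
      have "h (mid a b) \<le> t * ((1/2) * (dist a y)\<^sup>2 + (1/2) * (dist b y)\<^sup>2)
                           + (1 - t) * ((1/2) * (dist a x)\<^sup>2 + (1/2) * (dist b x)\<^sup>2)"
        unfolding h_def using 1 2 t0 t1
        by (intro add_mono mult_left_mono) auto
      also have "\<dots> = (h a + h b) / 2" unfolding h_def by (simp add: dist_commute field_simps)
      also have "\<dots> \<le> max (h a) (h b)" by simp
      finally show ?thesis .
    qed
    have lb: "0 \<le> h z" for z unfolding h_def using t0 t1 by auto
    have bd: "\<exists>B. \<forall>z. h z \<le> K \<longrightarrow> dist x z \<le> B" for K
    proof (intro exI allI impI)
      fix z assume "h z \<le> K"
      then have "(1 - t) * (dist x z)\<^sup>2 \<le> K" unfolding h_def using t0 by (smt (verit) mult_nonneg_nonneg zero_le_power2)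
      then have k: "(dist x z)\<^sup>2 \<le> K / (1 - t)" using t1 by (simp add: field_simps)
      show "dist x z \<le> max 1 (K / (1 - t))"
      proof (cases "dist x z \<le> 1")
        case False
        then have "dist x z \<le> (dist x z)\<^sup>2" unfolding power2_eq_square by (intro mult_le_cancel_left1[THEN iffD2]) auto
        then show ?thesis using k by linarith
      qed simp
    qed
    obtain z where zmin: "\<And>q. h z \<le> h q" using min_exists[OF H cont qc lb bd] by blast
    have hz: "h z \<le> t * (1 - t) * D\<^sup>2"
    proof (rule ccontr)
      assume "\<not> ?thesis"
      then have g: "h z - t * (1 - t) * D\<^sup>2 > 0" by simp
      define g where "g = h z - t * (1 - t) * D\<^sup>2"
      have gp: "g / D\<^sup>2 > 0" using g Dp by (simp add: g_def)
      obtain n where n: "(1/2::real)^n < g / D\<^sup>2" using real_arch_pow_inv[OF gp, of "1/2"] by auto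
      define k where "k = nat \<lfloor>t * 2^n\<rfloor>"
      have fl0: "0 \<le> \<lfloor>t * 2^n\<rfloor>" using t0 by simp
      have rk: "real k = of_int \<lfloor>t * 2^n\<rfloor>" unfolding k_def using fl0 by simp
      have kle: "real k \<le> t * 2^n" using rk by linarith
      have kge: "real k > t * 2^n - 1" using rk by linarith
      have "t * 2^n \<le> 1 * 2^n" using t1 by (intro mult_right_mono) auto
      then have "real k \<le> 2^n" using kle by linarith
      then have kn: "k \<le> 2^n" using of_nat_le_iff[of k "2^n", where 'a=real] by simp
      define \<tau> where "\<tau> = real k / 2^n"
      have p2: "(2::real)^n > 0" by simp
      have te: "\<tau> - t = (real k - t * 2^n) / 2^n" unfolding \<tau>_def using p2 by (simp add: field_simps)
      have ab: "\<bar>real k - t * 2^n\<bar> \<le> 1" using kle kge by linarith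
      have tau1: "\<bar>\<tau> - t\<bar> \<le> 1 / 2^n"
        unfolding te abs_divide using ab p2 by (simp add: divide_right_mono)
      obtain w where w1: "dist x w = \<tau> * D" and w2: "dist w y = (1 - \<tau>) * D"
        using dyad[of k n x y] kn unfolding \<tau>_def D_def by blast
      have hw: "h w = D\<^sup>2 * (t * (1 - t) + (\<tau> - t)\<^sup>2)"
        unfolding h_def dist_commute[of y w] w1 w2 by (simp add: power2_eq_square algebra_simps)
      have "(\<tau> - t)\<^sup>2 \<le> (1 / 2^n)\<^sup>2" using tau1 by (metis power2_abs abs_ge_zero power_mono)
      also have "\<dots> \<le> 1 / 2^n"
      proof -
        have o: "(1::real) \<le> 2^n" by simp
        then have "(2::real)^n \<le> 2^n * 2^n" by (simp add: mult_le_cancel_left1)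
        then show ?thesis unfolding power2_eq_square using o by (simp add: divide_left_mono)
      qed
      also have "\<dots> = (1/2)^n" by (simp add: power_divide)
      finally have "(\<tau> - t)\<^sup>2 < g / D\<^sup>2" using n by linarith
      then have "D\<^sup>2 * (\<tau> - t)\<^sup>2 < g" using Dp by (simp add: field_simps)
      then have "h w < h z" using hw unfolding g_def by (simp add: algebra_simps)
      then show False using zmin[of w] by linarith
    qed
    define u where "u = dist x z"
    define v where "v = dist z y"
    have uv: "D \<le> u + v" unfolding u_def v_def D_def by (rule dist_triangle)
    have u0: "0 \<le> u" and v0: "0 \<le> v" by (auto simp: u_def v_def)
    have hzuv: "h z = (1 - t) * u\<^sup>2 + t * v\<^sup>2" unfolding h_def u_def v_def by (simp add: dist_commute)
    have ident: "(1 - t) * u\<^sup>2 + t * v\<^sup>2 = t * (1 - t) * (u + v)\<^sup>2 + ((1 - t) * u - t * v)\<^sup>2"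
      by (simp add: power2_eq_square algebra_simps)
    have tt: "t * (1 - t) > 0" using t0 t1 by simp
    have DD: "D\<^sup>2 \<le> (u + v)\<^sup>2" using uv Dp by (intro power_mono) auto
    have A: "t * (1 - t) * D\<^sup>2 \<le> t * (1 - t) * (u + v)\<^sup>2" using DD tt by (intro mult_left_mono) auto
    have sq0: "((1 - t) * u - t * v)\<^sup>2 \<le> 0" using hz hzuv ident A by linarith
    then have e1: "(1 - t) * u = t * v" by simp
    have "t * (1 - t) * (u + v)\<^sup>2 \<le> t * (1 - t) * D\<^sup>2" using hz hzuv ident zero_le_power2[of "(1 - t) * u - t * v"] by linarith
    then have "(u + v)\<^sup>2 \<le> D\<^sup>2" by (rule mult_le_cancel_left_pos[OF tt, THEN iffD1])
    then have "u + v \<le> D" using Dp by (auto intro: power2_le_imp_le)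
    then have uvD: "u + v = D" using uv by linarith
    have "u = t * (u + v)" using e1 by (simp add: algebra_simps)
    then have "u = s" using uvD Dp by (simp add: t_def)
    then show ?thesis using uvD unfolding u_def v_def D_def by (intro exI[of _ z]) auto
  qed
qed

end

definition bp :: "'a::metric_space \<Rightarrow> 'a \<Rightarrow> real \<Rightarrow> 'a" where
  "bp x y s = (SOME z. dist x z = s \<and> dist z y = dist x y - s)"

context
  assumes H: "hadamard TYPE('a::complete_space)"
begin

lemma bp_prop:
  fixes x y :: 'a
  assumes "0 \<le> s" "s \<le> dist x y"
  shows "dist x (bp x y s) = s" "dist (bp x y s) y = dist x y - s"
proof -
  have "\<exists>z. dist x z = s \<and> dist z y = dist x y - s" by (rule bp_exists[OF H assms])
  then have "dist x (bp x y s) = s \<and> dist (bp x y s) y = dist x y - s"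
    unfolding bp_def by (rule someI_ex)
  then show "dist x (bp x y s) = s" "dist (bp x y s) y = dist x y - s" by auto
qed

lemma bp_eq:
  fixes x y z :: 'a
  assumes "dist x z = s" "dist z y = dist x y - s"
  shows "bp x y s = z"
proof -
  have s0: "0 \<le> s" using assms(1) by auto
  have s1: "s \<le> dist x y" using assms(2) zero_le_dist[of z y] by linarith
  show ?thesis using bp_unique[OF H bp_prop[OF s0 s1] assms] .
qed

lemma bp_dist:
  fixes x y :: 'a
  assumes "0 \<le> s" "s \<le> u" "u \<le> dist x y"
  shows "dist (bp x y s) (bp x y u) = u - s"
proof -
  define z where "z = bp x y u"
  have z1: "dist x z = u" and z2: "dist z y = dist x y - u"
    using bp_prop[of u x y] assms unfolding z_def by auto
  define w where "w = bp x z s"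
  have w1: "dist x w = s" and w2: "dist w z = u - s"
    using bp_prop[of s x z] assms z1 unfolding w_def by auto
  have "dist w y \<le> dist w z + dist z y" by (rule dist_triangle)
  moreover have "dist x y \<le> dist x w + dist w y" by (rule dist_triangle)
  ultimately have "dist w y = dist x y - s" using w1 w2 z2 by linarith
  then have "bp x y s = w" using w1 by (intro bp_eq) auto
  then show ?thesis using w2 z_def by simp
qed

lemma bp_sub:
  fixes x y :: 'a
  assumes "0 \<le> r" "r \<le> s" "s \<le> dist x y"
  shows "bp x (bp x y s) r = bp x y r"
proof -
  have p1: "dist x (bp x y s) = s" using bp_prop[of s x y] assms by auto
  have q1: "dist x (bp x y r) = r" using bp_prop[of r x y] assms by auto
  have "dist (bp x y r) (bp x y s) = s - r" using bp_dist[of r s x y] assms by auto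
  then show ?thesis using p1 q1 by (intro bp_eq) auto
qed

lemma mid_bp: "mid x y = bp x y (dist x y / 2)" for x y :: 'a
  using mid_dist1[OF H, of x y] mid_dist2[OF H, of x y]
  by (intro bp_eq[symmetric]) auto

lemma bp_unit: "unit_geodesic_from_to (bp x y) x y" for x y :: 'a
  unfolding unit_geodesic_from_to_def
proof (intro conjI ballI)
  show "bp x y 0 = x" by (intro bp_eq) auto
  show "bp x y (dist x y) = y" by (intro bp_eq) auto
  fix s t assume s: "s \<in> {0..dist x y}" and t: "t \<in> {0..dist x y}"
  show "dist (bp x y s) (bp x y t) = \<bar>s - t\<bar>"
  proof (cases "s \<le> t")
    case True then show ?thesis using bp_dist[of s t x y] s t by auto
  next
    case False then show ?thesis using bp_dist[of t s x y] s t by (auto simp: dist_commute)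
  qed
qed

lemma pow_ex:
  fixes c L :: real assumes "0 < c"
  shows "\<exists>N. L \<le> 2^N * c"
proof -
  obtain N where "L / c < 2^N" using real_arch_pow[of 2 "L / c"] by auto
  then have "L < 2^N * c" using assms by (simp add: field_simps)
  then show ?thesis by (intro exI[of _ N]) simp
qed

lemma nb_line:
  fixes a b y y' :: 'a
  assumes NB: "non_branching TYPE('a)"
    and hy: "dist a y = dist a b + dist b y" and hy': "dist a y' = dist a b + dist b y'"
    and ab: "a \<noteq> b" and le: "dist a y \<le> dist a y'"
  shows "bp a y' (dist a y) = y"
proof -
  define c where "c = dist a b"
  define L where "L = dist a y"
  define L' where "L' = dist a y'"
  have c0: "c > 0" using ab by (simp add: c_def)
  have cL: "c \<le> L" using hy by (simp add: c_def L_def)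
  have LL: "L \<le> L'" using le by (simp add: L_def L'_def)
  define m where "m n = min (2^n * c) L" for n :: nat
  have m0: "0 \<le> m n" for n using c0 cL by (simp add: m_def)
  have mL: "m n \<le> L" for n by (simp add: m_def)
  have mh: "m (Suc n) / 2 \<le> m n" for n using c0 cL by (simp add: m_def min_def)
  have claim: "bp a y (m n) = bp a y' (m n)" for n
  proof (induction n)
    case 0
    have "m 0 = c" using cL by (simp add: m_def)
    moreover have "bp a y c = b" using hy by (intro bp_eq) (auto simp: c_def)
    moreover have "bp a y' c = b" using hy' by (intro bp_eq) (auto simp: c_def)
    ultimately show ?case by simp
  next
    case (Suc n)
    define s' where "s' = m (Suc n)"
    define p where "p = bp a y s'"
    define p' where "p' = bp a y' s'"
    have s'0: "0 \<le> s'" and s'L: "s' \<le> L" using m0 mL by (auto simp: s'_def)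
    have dp: "dist a p = s'" unfolding p_def using bp_prop[of s' a y] s'0 s'L by (simp add: L_def)
    have dp': "dist a p' = s'" unfolding p'_def using bp_prop[of s' a y'] s'0 s'L LL by (simp add: L'_def)
    have h0: "0 \<le> s' / 2" and h1: "s' / 2 \<le> s'" and h2: "s' / 2 \<le> m n"
      using s'0 mh[of n] by (auto simp: s'_def)
    have "bp a p (dist a p / 2) = bp a y (s' / 2)"
      unfolding dp unfolding p_def using h0 h1 s'L by (intro bp_sub) (auto simp: L_def)
    also have "\<dots> = bp a (bp a y (m n)) (s' / 2)"
      using h0 h2 mL[of n] by (intro bp_sub[symmetric]) (auto simp: L_def)
    also have "\<dots> = bp a (bp a y' (m n)) (s' / 2)" using Suc.IH by simp
    also have "\<dots> = bp a y' (s' / 2)"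
      using h0 h2 mL[of n] LL by (intro bp_sub) (auto simp: L'_def)
    also have "\<dots> = bp a p' (dist a p' / 2)"
      unfolding dp' unfolding p'_def using h0 h1 s'L LL by (intro bp_sub[symmetric]) (auto simp: L'_def)
    finally have "p = p'" using NB bp_unit[of a p] bp_unit[of a p']
      unfolding non_branching_def by blast
    then show ?case by (simp add: p_def p'_def s'_def)
  qed
  obtain N where "L \<le> 2^N * c" using pow_ex[OF c0] by blast
  then have mN: "m N = L" by (simp add: m_def)
  have "bp a y L = y" by (intro bp_eq) (auto simp: L_def)
  then show ?thesis using claim[of N] mN by (simp add: L_def)
qed

lemma concat:
  fixes a b e f :: 'a
  assumes h1: "dist a e = dist a b + dist b e" and h2: "dist b f = dist b e + dist e f"
    and be: "b \<noteq> e"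
  shows "dist a f = dist a b + dist b f"
proof -
  define c where "c = dist b e"
  define L where "L = dist b f"
  define A where "A = dist a b"
  have c0: "c > 0" using be by (simp add: c_def)
  have cL: "c \<le> L" using h2 by (simp add: c_def L_def)
  define m where "m n = min (2^n * c) L" for n :: nat
  have m0: "0 \<le> m n" for n using c0 cL by (simp add: m_def)
  have mL: "m n \<le> L" for n by (simp add: m_def)
  have mh: "m (Suc n) / 2 \<le> m n" for n using c0 cL by (simp add: m_def min_def)
  define \<phi> where "\<phi> s = dist a (bp b f s)" for s
  have up: "\<phi> s \<le> A + s" if "0 \<le> s" "s \<le> L" for s
  proof -
    have "dist b (bp b f s) = s" using bp_prop[of s b f] that by (simp add: L_def)
    then show ?thesis unfolding \<phi>_def A_def by (metis dist_triangle)
  qed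
  have claim: "\<phi> (m n) = A + m n" for n
  proof (induction n)
    case 0
    have "m 0 = c" using cL by (simp add: m_def)
    moreover have "bp b f c = e" using h2 by (intro bp_eq) (auto simp: c_def)
    ultimately show ?case using h1 by (simp add: \<phi>_def A_def c_def)
  next
    case (Suc n)
    define s' where "s' = m (Suc n)"
    define s where "s = m n"
    define p where "p = bp b f s'"
    have s'0: "0 \<le> s'" and s'L: "s' \<le> L" using m0 mL by (auto simp: s'_def)
    have s0: "0 \<le> s" and sL: "s \<le> L" using m0 mL by (auto simp: s_def)
    have dp: "dist b p = s'" unfolding p_def using bp_prop[of s' b f] s'0 s'L by (simp add: L_def)
    have h0: "0 \<le> s' / 2" and hh1: "s' / 2 \<le> s'" and hh2: "s' / 2 \<le> s"
      using s'0 mh[of n] by (auto simp: s'_def s_def)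
    have mp: "mid b p = bp b f (s' / 2)"
      unfolding mid_bp dp unfolding p_def using h0 hh1 s'L by (intro bp_sub) (auto simp: L_def)
    have "dist (bp b f (s'/2)) (bp b f s) = s - s'/2"
      using h0 hh2 sL by (intro bp_dist) (auto simp: L_def)
    moreover have "\<phi> s \<le> \<phi> (s'/2) + dist (bp b f (s'/2)) (bp b f s)"
      unfolding \<phi>_def by (rule dist_triangle)
    moreover have "\<phi> s = A + s" using Suc.IH by (simp add: s_def)
    ultimately have lo: "A + s' / 2 \<le> \<phi> (s'/2)" by linarith
    have "\<phi> (s'/2) \<le> (dist a b + dist a p) / 2"
      unfolding \<phi>_def mp[symmetric] by (rule mid_conv[OF H])
    then have "A + s' \<le> \<phi> s'" using lo by (simp add: \<phi>_def p_def A_def)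
    then show ?case using up[OF s'0 s'L] by (simp add: s'_def)
  qed
  obtain N where "L \<le> 2^N * c" using pow_ex[OF c0] by blast
  then have mN: "m N = L" by (simp add: m_def)
  have "bp b f L = f" by (intro bp_eq) (auto simp: L_def)
  then show ?thesis using claim[of N] mN by (simp add: \<phi>_def A_def L_def)
qed

end

definition step3 :: "'a \<Rightarrow> 'a \<Rightarrow> 'a \<Rightarrow> real \<Rightarrow> 'a" where
  "step3 a b e t = (if t < 0 then a else if t < 1 then b else e)"

lemma step3_geo:
  fixes a b e :: "'a::metric_space"
  assumes "dist a e = dist a b + dist b e"
  shows "geodesic UNIV (step3 a b e)"
  unfolding geodesic_def
proof (intro conjI ballI impI)
  show "is_interval (UNIV :: real set)" by simp
  fix r s t :: real assume "r < s \<and> s < t"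
  then show "dist (step3 a b e r) (step3 a b e t) = dist (step3 a b e r) (step3 a b e s) + dist (step3 a b e s) (step3 a b e t)"
  proof -
    have rs: "r < s" and st: "s < t" using \<open>r < s \<and> s < t\<close> by auto
    consider "t < 0" | "0 \<le> t" "t < 1" "s < 0" | "0 \<le> t" "t < 1" "0 \<le> s"
      | "1 \<le> t" "s < 0" | "1 \<le> t" "0 \<le> s" "s < 1" "r < 0" | "1 \<le> t" "0 \<le> s" "s < 1" "0 \<le> r"
      | "1 \<le> t" "1 \<le> s"
      by linarith
    then show ?thesis
    proof cases
      case 1 then show ?thesis using rs st by (simp add: step3_def)
    next
      case 2 then show ?thesis using rs st by (simp add: step3_def)
    next
      case 3 then show ?thesis using rs st by (simp add: step3_def dist_commute)
    next
      case 4 then show ?thesis using rs st by (simp add: step3_def dist_commute)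
    next
      case 5 then show ?thesis using rs st assms by (simp add: step3_def dist_commute)
    next
      case 6 then show ?thesis using rs st by (simp add: step3_def dist_commute)
    next
      case 7 then show ?thesis using rs st by (simp add: step3_def dist_commute)
    qed
  qed
qed

lemma step3_image: "step3 a b e ` UNIV = {a, b, e}"
proof -
  have "step3 a b e (-1) = a" "step3 a b e 0 = b" "step3 a b e 1 = e" by (auto simp: step3_def)
  then have "{a, b, e} \<subseteq> step3 a b e ` UNIV" by (metis empty_subsetI insert_subset rangeI)
  moreover have "step3 a b e ` UNIV \<subseteq> {a, b, e}" by (auto simp: step3_def)
  ultimately show ?thesis by blast
qed

lemma line_geodesic:
  fixes U :: "'a::complete_space set" and f :: "'a \<Rightarrow> real"
  assumes iso: "\<And>y y'. y \<in> U \<Longrightarrow> y' \<in> U \<Longrightarrow> dist y y' = \<bar>f y - f y'\<bar>"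
    and cl: "closed U"
  shows "\<exists>I \<gamma>. geodesic I \<gamma> \<and> \<gamma> ` I = U"
proof -
  define A where "A = f ` U"
  have clA: "closed A"
    unfolding closed_sequential_limits
  proof (intro allI impI)
    fix x l assume h: "(\<forall>n. x n \<in> A) \<and> x \<longlonglongrightarrow> l"
    then have "\<forall>n. \<exists>z. z \<in> U \<and> x n = f z" unfolding A_def by auto
    then obtain y where "\<forall>n. y n \<in> U \<and> x n = f (y n)"
      using choice[of "\<lambda>n z. z \<in> U \<and> x n = f z"] by blast
    then have y: "\<And>n. y n \<in> U" "\<And>n. x n = f (y n)" by auto
    have "Cauchy x" using h LIMSEQ_imp_Cauchy by blast
    moreover have dd: "dist (y m) (y n) = dist (x m) (x n)" for m n
      using iso[OF y(1) y(1)] y(2) by (simp add: dist_real_def)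
    ultimately have "Cauchy y"
      unfolding Cauchy_def by (simp only: dd)
    then have "convergent y" by (rule Cauchy_convergent)
    then obtain ys where ys: "y \<longlonglongrightarrow> ys" unfolding convergent_def by blast
    have ysU: "ys \<in> U" by (rule closed_sequentially[OF cl _ ys]) (use y(1) in blast)
    have "(\<lambda>n. dist (y n) ys) \<longlonglongrightarrow> 0" using ys tendsto_dist_iff by blast
    moreover have "dist (y n) ys = \<bar>x n - f ys\<bar>" for n using iso[OF y(1) ysU] y(2) by simp
    ultimately have "(\<lambda>n. \<bar>x n - f ys\<bar>) \<longlonglongrightarrow> 0" by simp
    then have "x \<longlonglongrightarrow> f ys" by (simp add: LIM_zero_iff tendsto_rabs_zero_iff)
    then have "l = f ys" using h LIMSEQ_unique by blast
    then show "l \<in> A" using ysU unfolding A_def by simp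
  qed
  define I where "I = {t. \<exists>a\<in>A. a \<le> t}"
  define g where "g t = Sup (A \<inter> {..t})" for t
  have gA: "g t \<in> A" and gle: "g t \<le> t" if "t \<in> I" for t
  proof -
    have ne: "A \<inter> {..t} \<noteq> {}" using that unfolding I_def by auto
    have bd: "bdd_above (A \<inter> {..t})" by (rule bdd_aboveI[of _ t]) auto
    have "closed (A \<inter> {..t})" using clA by (intro closed_Int) auto
    then have "g t \<in> A \<inter> {..t}" unfolding g_def using ne bd by (intro closed_contains_Sup)
    then show "g t \<in> A" "g t \<le> t" by auto
  qed
  have gmono: "g r \<le> g t" if "r \<in> I" "r \<le> t" for r t
  proof -
    have ne: "A \<inter> {..r} \<noteq> {}" using that unfolding I_def by auto
    have bd: "bdd_above (A \<inter> {..t})" by (rule bdd_aboveI[of _ t]) auto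
    show ?thesis unfolding g_def using ne bd that(2) by (intro cSup_subset_mono) auto
  qed
  have gid: "g a = a" if "a \<in> A" for a
    unfolding g_def using that by (intro cSup_eq_maximum) auto
  define \<gamma> where "\<gamma> t = (SOME y. y \<in> U \<and> f y = g t)" for t
  have \<gamma>p: "\<gamma> t \<in> U \<and> f (\<gamma> t) = g t" if "t \<in> I" for t
  proof -
    have "\<exists>y. y \<in> U \<and> f y = g t" using gA[OF that] unfolding A_def by auto
    then show ?thesis unfolding \<gamma>_def by (rule someI_ex)
  qed
  have AI: "A \<subseteq> I" unfolding I_def by auto
  have geo: "geodesic I \<gamma>"
    unfolding geodesic_def
  proof (intro conjI ballI impI)
    show "is_interval I" unfolding is_interval_1 I_def by (auto intro: order_trans)
    fix r s t assume r: "r \<in> I" and s: "s \<in> I" and t: "t \<in> I" and rst: "r < s \<and> s < t"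
    have "g r \<le> g s" "g s \<le> g t" using gmono r s rst by auto
    then show "dist (\<gamma> r) (\<gamma> t) = dist (\<gamma> r) (\<gamma> s) + dist (\<gamma> s) (\<gamma> t)"
      using iso \<gamma>p[OF r] \<gamma>p[OF s] \<gamma>p[OF t] by auto
  qed
  have "\<gamma> ` I = U"
  proof
    show "\<gamma> ` I \<subseteq> U" using \<gamma>p by auto
    show "U \<subseteq> \<gamma> ` I"
    proof
      fix y assume y: "y \<in> U"
      define t where "t = f y"
      have tA: "t \<in> A" using y unfolding t_def A_def by simp
      then have tI: "t \<in> I" using AI by auto
      have "f (\<gamma> t) = t" using \<gamma>p[OF tI] gid[OF tA] by simp
      then have "dist (\<gamma> t) y = 0" using iso[of "\<gamma> t" y] \<gamma>p[OF tI] y by (simp add: t_def)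
      then have "y = \<gamma> t" by simp
      then show "y \<in> \<gamma> ` I" using tI by blast
    qed
  qed
  with geo show ?thesis by blast
qed

context
  fixes P :: "'m measure" and Y :: "'m \<Rightarrow> 'a::complete_space" and x0 :: 'a
  assumes H: "hadamard TYPE('a)" and PS: "prob_space P" and YM: "Y \<in> measurable P borel"
begin

definition FF :: "'a \<Rightarrow> real" where
  "FF q = integral\<^sup>L P (\<lambda>\<omega>. dist (Y \<omega>) q - dist (Y \<omega>) x0)"

lemma meas_d: "(\<lambda>\<omega>. dist (Y \<omega>) q) \<in> borel_measurable P"
  using YM by (intro borel_measurable_continuous_on[of "\<lambda>y. dist y q"]) (auto intro: continuous_intros)

lemma int_g: "integrable P (\<lambda>\<omega>. dist (Y \<omega>) q - dist (Y \<omega>) x0)"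
proof (rule finite_measure.integrable_const_bound[of P _ "dist q x0"])
  show "finite_measure P" using PS by (rule prob_space.finite_measure)
  show "AE x in P. norm (dist (Y x) q - dist (Y x) x0) \<le> dist q x0"
  proof (intro AE_I2)
    fix x show "norm (dist (Y x) q - dist (Y x) x0) \<le> dist q x0"
      using abs_dist_diff_le[of q "Y x" x0] by (simp add: dist_commute)
  qed
  show "(\<lambda>\<omega>. dist (Y \<omega>) q - dist (Y \<omega>) x0) \<in> borel_measurable P"
    using meas_d by (intro borel_measurable_diff) auto
qed

lemma int_const: "integral\<^sup>L P (\<lambda>\<omega>. c) = (c::real)"
  using prob_space.prob_space[OF PS] by simp

lemma FF_diff: "FF q - FF q' = integral\<^sup>L P (\<lambda>\<omega>. dist (Y \<omega>) q - dist (Y \<omega>) q')"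
  unfolding FF_def using Bochner_Integration.integral_diff[OF int_g[of q] int_g[of q']]
  by simp

lemma FF_lip: "FF q - FF q' \<le> dist q q'"
proof -
  have "integral\<^sup>L P (\<lambda>\<omega>. dist (Y \<omega>) q - dist (Y \<omega>) q') \<le> integral\<^sup>L P (\<lambda>\<omega>. dist q q')"
  proof (rule integral_mono)
    show "integrable P (\<lambda>\<omega>. dist (Y \<omega>) q - dist (Y \<omega>) q')"
      using Bochner_Integration.integrable_diff[OF int_g[of q] int_g[of q']] by simp
    show "integrable P (\<lambda>\<omega>. dist q q')"
      using prob_space.finite_measure[OF PS] by (simp add: finite_measure.integrable_const)
    show "dist (Y \<omega>) q - dist (Y \<omega>) q' \<le> dist q q'" for \<omega>
      by (metis dist_commute dist_triangle diff_le_eq add.commute)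
  qed
  then show ?thesis using FF_diff[of q q'] prob_space.prob_space[OF PS] by simp
qed

lemma FF_cont: "continuous_on UNIV FF"
proof (rule lipschitz_on_continuous_on[of 1])
  show "1-lipschitz_on UNIV FF"
    unfolding lipschitz_on_def
  proof (intro conjI ballI)
    fix x y :: 'a
    show "dist (FF x) (FF y) \<le> 1 * dist x y"
      using FF_lip[of x y] FF_lip[of y x] by (simp add: dist_real_def dist_commute abs_le_iff)
  qed simp
qed

lemma FF_mid: "FF (mid a b) \<le> (FF a + FF b) / 2"
proof -
  have "FF (mid a b) \<le> integral\<^sup>L P (\<lambda>\<omega>. ((dist (Y \<omega>) a - dist (Y \<omega>) x0) + (dist (Y \<omega>) b - dist (Y \<omega>) x0)) / 2)"
    unfolding FF_def
  proof (rule integral_mono)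
    show "integrable P (\<lambda>\<omega>. dist (Y \<omega>) (mid a b) - dist (Y \<omega>) x0)" by (rule int_g)
    show "integrable P (\<lambda>\<omega>. ((dist (Y \<omega>) a - dist (Y \<omega>) x0) + (dist (Y \<omega>) b - dist (Y \<omega>) x0)) / 2)"
      using int_g[of a] int_g[of b] by (intro integrable_divide Bochner_Integration.integrable_add)
    show "dist (Y \<omega>) (mid a b) - dist (Y \<omega>) x0 \<le> ((dist (Y \<omega>) a - dist (Y \<omega>) x0) + (dist (Y \<omega>) b - dist (Y \<omega>) x0)) / 2" for \<omega>
      using mid_conv[OF H, of "Y \<omega>" a b] by (simp add: dist_commute field_simps)
  qed
  also have "\<dots> = (FF a + FF b) / 2"
    unfolding FF_def integral_divide_zero
    using Bochner_Integration.integral_add[OF int_g[of a] int_g[of b]] by simp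
  finally show ?thesis .
qed

lemma set_le_sets: "{\<omega> \<in> space P. dist (Y \<omega>) x0 \<le> r} \<in> sets P"
proof -
  have "{\<omega> \<in> space P. dist (Y \<omega>) x0 \<le> r} = (\<lambda>\<omega>. dist (Y \<omega>) x0) -` {..r} \<inter> space P" by auto
  also have "\<dots> \<in> sets P" by (rule measurable_sets[OF meas_d]) auto
  finally show ?thesis .
qed

lemma exists_R: "\<exists>R. 0 \<le> R \<and> 3/4 < measure P {\<omega> \<in> space P. dist (Y \<omega>) x0 \<le> R}"
proof -
  define A where "A n = {\<omega> \<in> space P. dist (Y \<omega>) x0 \<le> real n}" for n :: nat
  have As: "range A \<subseteq> sets P" using set_le_sets unfolding A_def by auto
  have Ainc: "incseq A" unfolding A_def incseq_def by auto
  have "\<Union> (range A) = space P"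
  proof
    show "\<Union> (range A) \<subseteq> space P" unfolding A_def by auto
    show "space P \<subseteq> \<Union> (range A)"
    proof
      fix \<omega> assume "\<omega> \<in> space P"
      moreover obtain n where "dist (Y \<omega>) x0 \<le> real n" using real_arch_simple by blast
      ultimately show "\<omega> \<in> \<Union> (range A)" unfolding A_def by auto
    qed
  qed
  then have "(\<lambda>n. measure P (A n)) \<longlonglongrightarrow> 1"
    using finite_measure.finite_Lim_measure_incseq[OF prob_space.finite_measure[OF PS] As Ainc]
      prob_space.prob_space[OF PS] by simp
  then obtain N where "\<forall>n\<ge>N. dist (measure P (A n)) 1 < 1/4"
    unfolding lim_sequentially by (metis zero_less_divide_1_iff zero_less_numeral)
  then have "dist (measure P (A N)) 1 < 1/4" by simp
  then have "3/4 < measure P (A N)" unfolding dist_real_def abs_less_iff by linarith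
  then show ?thesis unfolding A_def by (intro exI[of _ "real N"]) auto
qed

lemma FF_lower:
  assumes R0: "0 \<le> R" and R: "3/4 < measure P {\<omega> \<in> space P. dist (Y \<omega>) x0 \<le> R}"
  shows "dist q x0 / 2 - 2 * R \<le> FF q"
proof -
  define D where "D = dist q x0"
  have lb1: "dist (Y \<omega>) q - dist (Y \<omega>) x0 \<ge> - D" for \<omega>
    unfolding D_def using dist_triangle[of "Y \<omega>" x0 q] by linarith
  have lb2: "dist (Y \<omega>) q - dist (Y \<omega>) x0 \<ge> D - 2 * dist (Y \<omega>) x0" for \<omega>
    unfolding D_def using dist_triangle[of q x0 "Y \<omega>"] dist_commute[of q "Y \<omega>"] by linarith
  show ?thesis
  proof (cases "D \<le> R")
    case True
    have "integral\<^sup>L P (\<lambda>\<omega>. - D) \<le> FF q" unfolding FF_def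
      using lb1 prob_space.finite_measure[OF PS]
      by (intro integral_mono int_g) (auto simp: finite_measure.integrable_const)
    then have "- D \<le> FF q" using prob_space.prob_space[OF PS] by simp
    then show ?thesis using True R0 unfolding D_def by linarith
  next
    case False
    define A where "A = {\<omega> \<in> space P. dist (Y \<omega>) x0 \<le> R}"
    have As: "A \<in> sets P" unfolding A_def by (rule set_le_sets)
    have intA: "integrable P (indicator A :: 'm \<Rightarrow> real)"
      using As finite_measure.emeasure_finite[OF prob_space.finite_measure[OF PS], of A]
      by (intro integrable_real_indicator) (auto simp: less_top)
    have intc: "integrable P (\<lambda>\<omega>. - D :: real)"
      using prob_space.finite_measure[OF PS] by (simp add: finite_measure.integrable_const)
    have intl: "integrable P (\<lambda>\<omega>. - D + (2 * D - 2 * R) * indicator A \<omega>)"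
      using intA intc by (intro Bochner_Integration.integrable_add integrable_mult_right)
    have "integral\<^sup>L P (\<lambda>\<omega>. - D + (2 * D - 2 * R) * indicator A \<omega>) \<le> FF q" unfolding FF_def
    proof (intro integral_mono intl int_g)
      fix \<omega> assume "\<omega> \<in> space P"
      show "- D + (2 * D - 2 * R) * indicator A \<omega> \<le> dist (Y \<omega>) q - dist (Y \<omega>) x0"
      proof (cases "\<omega> \<in> A")
        case True
        then have "dist (Y \<omega>) x0 \<le> R" unfolding A_def by auto
        then show ?thesis using True lb2[of \<omega>] by simp
      next
        case False then show ?thesis using lb1[of \<omega>] by simp
      qed
    qed
    moreover have "integral\<^sup>L P (\<lambda>\<omega>. - D + (2 * D - 2 * R) * indicator A \<omega>) = - D + (2 * D - 2 * R) * measure P A"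
    proof -
      have "integral\<^sup>L P (\<lambda>\<omega>. - D + (2 * D - 2 * R) * indicator A \<omega>)
          = integral\<^sup>L P (\<lambda>\<omega>. - D) + integral\<^sup>L P (\<lambda>\<omega>. (2 * D - 2 * R) * indicator A \<omega>)"
        using intc intA by (intro Bochner_Integration.integral_add integrable_mult_right)
      also have "\<dots> = - D + (2 * D - 2 * R) * measure P A"
        using prob_space.prob_space[OF PS] As by (simp add: integral_indicator)
      finally show ?thesis .
    qed
    moreover have "(2 * D - 2 * R) * (3/4) \<le> (2 * D - 2 * R) * measure P A"
      using False R unfolding A_def by (intro mult_left_mono) auto
    ultimately have "- D + (2 * D - 2 * R) * (3/4) \<le> FF q" by linarith
    then show ?thesis unfolding D_def using R0 by (simp add: algebra_simps)
  qed
qed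

lemma med_exists: "\<exists>z. \<forall>q. FF z \<le> FF q"
proof -
  obtain R where R0: "0 \<le> R" and R: "3/4 < measure P {\<omega> \<in> space P. dist (Y \<omega>) x0 \<le> R}"
    using exists_R by blast
  have qc: "FF (mid a b) \<le> max (FF a) (FF b)" for a b
    using FF_mid[of a b] by (auto simp: max_def)
  have lb: "- 2 * R \<le> FF z" for z using FF_lower[OF R0 R, of z] zero_le_dist[of z x0] by linarith
  have bd: "\<exists>B. \<forall>z. FF z \<le> K \<longrightarrow> dist x0 z \<le> B" for K
  proof (intro exI allI impI)
    fix z assume "FF z \<le> K"
    then show "dist x0 z \<le> 2 * (K + 2 * R)" using FF_lower[OF R0 R, of z] by (simp add: dist_commute)
  qed
  show ?thesis by (rule min_exists[OF H FF_cont qc lb bd])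
qed

end

context
  assumes H: "hadamard TYPE('a::complete_space)"
begin

lemma mid_eq_abs:
  fixes y a b :: 'a
  assumes eq: "dist y (mid a b) = (dist y a + dist y b) / 2"
  shows "\<bar>dist y a - dist y b\<bar> = dist a b"
proof -
  have "(dist y (mid a b))\<^sup>2 \<le> (1/2) * (dist a y)\<^sup>2 + (1/2) * (dist b y)\<^sup>2 - (1/4) * (dist a b)\<^sup>2"
    by (rule mid_ineq[OF H])
  then have "((dist y a + dist y b) / 2)\<^sup>2 \<le> (1/2) * (dist y a)\<^sup>2 + (1/2) * (dist y b)\<^sup>2 - (1/4) * (dist a b)\<^sup>2"
    using eq by (simp add: dist_commute)
  then have "(dist a b)\<^sup>2 \<le> (dist y a - dist y b)\<^sup>2"
    by (simp add: power2_eq_square field_simps)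
  then have "(dist a b)\<^sup>2 \<le> \<bar>dist y a - dist y b\<bar>\<^sup>2" by simp
  then have "dist a b \<le> \<bar>dist y a - dist y b\<bar>" by (rule power2_le_imp_le) simp
  moreover have "\<bar>dist y a - dist y b\<bar> \<le> dist a b"
    using abs_dist_diff_le[of a y b] by (simp add: dist_commute)
  ultimately show ?thesis by linarith
qed

lemma iso_same:
  fixes a b y y' :: 'a
  assumes NB: "non_branching TYPE('a)" and ab: "a \<noteq> b"
    and hy: "dist a y = dist a b + dist b y" and hy': "dist a y' = dist a b + dist b y'"
  shows "dist y y' = \<bar>dist a y - dist a y'\<bar>"
proof (cases "dist a y \<le> dist a y'")
  case True
  have e: "bp a y' (dist a y) = y" by (rule nb_line[OF H NB hy hy' ab True])
  have "dist (bp a y' (dist a y)) y' = dist a y' - dist a y" using True by (intro bp_prop(2)[OF H]) auto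
  then show ?thesis using e True by simp
next
  case False
  then have F: "dist a y' \<le> dist a y" by simp
  have e: "bp a y (dist a y') = y'" by (rule nb_line[OF H NB hy' hy ab F])
  have "dist (bp a y (dist a y')) y = dist a y - dist a y'" using F by (intro bp_prop(2)[OF H]) auto
  then show ?thesis using e F by (simp add: dist_commute)
qed

lemma U_line:
  fixes q1 q2 :: 'a
  assumes NB: "non_branching TYPE('a)" and ne: "q1 \<noteq> q2"
  shows "\<exists>I \<gamma>. geodesic I \<gamma> \<and> \<gamma> ` I = {y. \<bar>dist y q1 - dist y q2\<bar> = dist q1 q2}"
proof (rule line_geodesic)
  define c where "c = dist q1 q2"
  have c0: "c > 0" using ne by (simp add: c_def)
  define U1 where "U1 y \<longleftrightarrow> dist q1 y = dist q1 q2 + dist q2 y" for y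
  define U2 where "U2 y \<longleftrightarrow> dist q2 y = dist q2 q1 + dist q1 y" for y
  have mem: "U1 y \<or> U2 y" if "y \<in> {y. \<bar>dist y q1 - dist y q2\<bar> = dist q1 q2}" for y
    using that unfolding U1_def U2_def by (auto simp: dist_commute abs_if split: if_splits)
  have notboth: "\<not> (U1 y \<and> U2 y)" for y using c0 unfolding U1_def U2_def c_def by (auto simp: dist_commute)
  define f where "f y = (if U1 y then dist q1 y else - dist q1 y)" for y
  show "closed {y. \<bar>dist y q1 - dist y q2\<bar> = dist q1 q2}"
    by (intro closed_Collect_eq continuous_intros)
  fix y y' assume y: "y \<in> {y. \<bar>dist y q1 - dist y q2\<bar> = dist q1 q2}"
    and y': "y' \<in> {y. \<bar>dist y q1 - dist y q2\<bar> = dist q1 q2}"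
  show "dist y y' = \<bar>f y - f y'\<bar>"
  proof (cases "U1 y")
    case True note t1 = this
    show ?thesis
    proof (cases "U1 y'")
      case True
      then show ?thesis using t1 iso_same[OF NB ne, of y y'] unfolding U1_def f_def by simp
    next
      case False
      then have u2: "U2 y'" using mem[OF y'] by simp
      have "dist y' y = dist y' q1 + dist q1 y"
      proof (rule concat[OF H])
        show "dist y' q2 = dist y' q1 + dist q1 q2" using u2 unfolding U2_def by (simp add: dist_commute)
        show "dist q1 y = dist q1 q2 + dist q2 y" using t1 unfolding U1_def .
        show "q1 \<noteq> q2" by (rule ne)
      qed
      then show ?thesis using t1 False unfolding f_def by (simp add: dist_commute)
    qed
  next
    case False note f1 = this
    then have u2: "U2 y" using mem[OF y] by simp
    show ?thesis
    proof (cases "U1 y'")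
      case True
      have "dist y y' = dist y q1 + dist q1 y'"
      proof (rule concat[OF H])
        show "dist y q2 = dist y q1 + dist q1 q2" using u2 unfolding U2_def by (simp add: dist_commute)
        show "dist q1 y' = dist q1 q2 + dist q2 y'" using True unfolding U1_def .
        show "q1 \<noteq> q2" by (rule ne)
      qed
      moreover have "f y - f y' = - (dist q1 y + dist q1 y')" unfolding f_def using True f1 by simp
      moreover have "\<bar>dist q1 y + dist q1 y'\<bar> = dist q1 y + dist q1 y'" by (intro abs_of_nonneg) simp
      ultimately show ?thesis by (metis abs_minus_cancel dist_commute)
    next
      case False
      then have u2': "U2 y'" using mem[OF y'] by simp
      have ne': "q2 \<noteq> q1" using ne by simp
      have "dist y y' = \<bar>dist q2 y - dist q2 y'\<bar>"
        using iso_same[OF NB ne', of y y'] u2 u2' unfolding U2_def by simp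
      then show ?thesis using u2 u2' f1 False unfolding f_def U2_def by (simp add: abs_minus_commute)
    qed
  qed
qed

end

context
  fixes P :: "'m measure" and Y :: "'m \<Rightarrow> 'a::complete_space" and x0 :: 'a
  assumes H: "hadamard TYPE('a)" and PS: "prob_space P" and YM: "Y \<in> measurable P borel"
begin

lemma two_med:
  fixes q1 q2 :: 'a
  assumes m1: "\<And>p. FF P Y x0 q1 \<le> FF P Y x0 p" and m2: "\<And>p. FF P Y x0 q2 \<le> FF P Y x0 p"
  shows "measure P {\<omega> \<in> space P. Y \<omega> \<in> {y. \<bar>dist y q1 - dist y q2\<bar> = dist q1 q2}} = 1"
proof -
  define w where "w = mid q1 q2"
  define g where "g q \<omega> = dist (Y \<omega>) q - dist (Y \<omega>) x0" for q \<omega>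
  define k where "k \<omega> = (g q1 \<omega> + g q2 \<omega>) / 2 - g w \<omega>" for \<omega>
  have ig: "integrable P (g q)" for q unfolding g_def by (rule int_g[OF H PS YM])
  have ik: "integrable P k" unfolding k_def using ig
    by (intro Bochner_Integration.integrable_diff integrable_divide Bochner_Integration.integrable_add)
  have k0: "0 \<le> k \<omega>" for \<omega>
    using mid_conv[OF H, of "Y \<omega>" q1 q2] unfolding k_def g_def w_def by (simp add: field_simps)
  have "integral\<^sup>L P k = (integral\<^sup>L P (g q1) + integral\<^sup>L P (g q2)) / 2 - integral\<^sup>L P (g w)"
    unfolding k_def using ig
    by (simp add: Bochner_Integration.integral_diff Bochner_Integration.integral_add integrable_divide
        Bochner_Integration.integrable_add)
  also have "\<dots> = (FF P Y x0 q1 + FF P Y x0 q2) / 2 - FF P Y x0 w"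
    unfolding FF_def[OF H PS YM] g_def by simp
  also have "\<dots> \<le> 0" using m1[of w] m2[of w] by simp
  finally have "integral\<^sup>L P k \<le> 0" .
  moreover have "0 \<le> integral\<^sup>L P k" using k0 by simp
  ultimately have "integral\<^sup>L P k = 0" by simp
  then have "AE \<omega> in P. k \<omega> = 0" using integral_nonneg_eq_0_iff_AE[OF ik] k0 by simp
  then have AEU: "AE \<omega> in P. \<omega> \<in> {\<omega> \<in> space P. Y \<omega> \<in> {y. \<bar>dist y q1 - dist y q2\<bar> = dist q1 q2}}"
  proof (rule AE_mp)
    show "AE \<omega> in P. k \<omega> = 0 \<longrightarrow> \<omega> \<in> {\<omega> \<in> space P. Y \<omega> \<in> {y. \<bar>dist y q1 - dist y q2\<bar> = dist q1 q2}}"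
    proof (rule AE_I2, intro impI)
      fix \<omega> assume sp: "\<omega> \<in> space P" and "k \<omega> = 0"
      then have "dist (Y \<omega>) (mid q1 q2) = (dist (Y \<omega>) q1 + dist (Y \<omega>) q2) / 2"
        unfolding k_def g_def w_def by simp
      then show "\<omega> \<in> {\<omega> \<in> space P. Y \<omega> \<in> {y. \<bar>dist y q1 - dist y q2\<bar> = dist q1 q2}}"
        using mid_eq_abs[OF H] sp by simp
    qed
  qed
  have cl: "closed {y. \<bar>dist y q1 - dist y q2\<bar> = dist q1 q2}"
    by (intro closed_Collect_eq continuous_intros)
  have "{\<omega> \<in> space P. Y \<omega> \<in> {y. \<bar>dist y q1 - dist y q2\<bar> = dist q1 q2}} \<in> sets P"
    using measurable_sets[OF YM borel_closed[OF cl]] by (simp add: Int_def vimage_def conj_commute)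
  then show ?thesis using prob_space.prob_eq_1[OF PS] AEU by blast
qed

end

theorem mainTheorem11:
  fixes P :: "'m measure" and Y :: "'m \<Rightarrow> 'a::complete_space" and x0 :: 'a
  assumes "hadamard TYPE('a)"
    and "prob_space P"
    and "Y \<in> measurable P borel"
  shows "((\<nexists>U S (\<Gamma> :: (real set \<times> (real \<Rightarrow> 'a)) set).
             U \<in> sets borel \<and> prob_space.prob P {\<omega> \<in> space P. Y \<omega> \<in> U} = 1 \<and>
             geodesic_segment S \<and> diameter S > 0 \<and>
             (\<forall>(I, \<gamma>) \<in> \<Gamma>. geodesic I \<gamma> \<and> S \<subseteq> \<gamma> ` I) \<and>
             U \<subseteq> (\<Union>(I, \<gamma>) \<in> \<Gamma>. \<gamma> ` I))
          \<longrightarrow> (\<exists>!q. q \<in> frechet_median_set P Y x0))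
       \<and> ((non_branching TYPE('a) \<and>
            (\<nexists>I \<gamma>. geodesic I \<gamma> \<and> prob_space.prob P {\<omega> \<in> space P. Y \<omega> \<in> \<gamma> ` I} = 1))
          \<longrightarrow> (\<exists>!q. q \<in> frechet_median_set P Y x0))"
proof -
  note H = assms(1) and PS = assms(2) and YM = assms(3)
  have memM: "q \<in> frechet_median_set P Y x0 \<longleftrightarrow> (\<forall>p. FF P Y x0 q \<le> FF P Y x0 p)" for q
    unfolding frechet_median_set_def FF_def[OF H PS YM] by simp
  obtain z where "\<forall>q. FF P Y x0 z \<le> FF P Y x0 q" using med_exists[OF H PS YM] by blast
  then have ex: "z \<in> frechet_median_set P Y x0" using memM by blast
  define UU where "UU q1 q2 = {y. \<bar>dist y q1 - dist y q2\<bar> = dist q1 q2}" for q1 q2 :: 'a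
  have two: "measure P {\<omega> \<in> space P. Y \<omega> \<in> UU q1 q2} = 1"
    if "q1 \<in> frechet_median_set P Y x0" "q2 \<in> frechet_median_set P Y x0" for q1 q2
    unfolding UU_def using two_med[OF H PS YM] that memM by blast
  have clU: "closed (UU q1 q2)" for q1 q2
    unfolding UU_def by (intro closed_Collect_eq continuous_intros)
  show ?thesis
  proof (intro conjI impI)
    assume hyp: "\<nexists>U S (\<Gamma> :: (real set \<times> (real \<Rightarrow> 'a)) set).
             U \<in> sets borel \<and> prob_space.prob P {\<omega> \<in> space P. Y \<omega> \<in> U} = 1 \<and>
             geodesic_segment S \<and> diameter S > 0 \<and>
             (\<forall>(I, \<gamma>) \<in> \<Gamma>. geodesic I \<gamma> \<and> S \<subseteq> \<gamma> ` I) \<and>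
             U \<subseteq> (\<Union>(I, \<gamma>) \<in> \<Gamma>. \<gamma> ` I)"
    show "\<exists>!q. q \<in> frechet_median_set P Y x0"
    proof (rule ex1I[of _ z])
      show "z \<in> frechet_median_set P Y x0" by (rule ex)
      fix q2 assume q2: "q2 \<in> frechet_median_set P Y x0"
      show "q2 = z"
      proof (rule ccontr)
        assume "q2 \<noteq> z"
        define q1 where "q1 = z"
        have ne: "q1 \<noteq> q2" using \<open>q2 \<noteq> z\<close> by (simp add: q1_def)
        define U where "U = UU q1 q2"
        define S where "S = {q1, q2}"
        define st where "st y = (if dist q1 y = dist q1 q2 + dist q2 y then step3 q1 q2 y else step3 q2 q1 y)" for y
        define \<Gamma> where "\<Gamma> = (\<lambda>y. ((UNIV :: real set), st y)) ` U"
        have "U \<in> sets borel" unfolding U_def using clU by (rule borel_closed)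
        moreover have "prob_space.prob P {\<omega> \<in> space P. Y \<omega> \<in> U} = 1"
          unfolding U_def q1_def using two[OF ex q2] by simp
        moreover have "geodesic_segment S"
          unfolding geodesic_segment_def
        proof (intro conjI)
          show "closed S" "bounded S" unfolding S_def by auto
          have "geodesic UNIV (step3 q1 q2 q2)" by (rule step3_geo) simp
          moreover have "S = step3 q1 q2 q2 ` UNIV" unfolding S_def step3_image by auto
          ultimately show "\<exists>I \<gamma>. geodesic I \<gamma> \<and> S = \<gamma> ` I" by blast
        qed
        moreover have "diameter S > 0"
        proof -
          have "dist q1 q2 \<le> diameter S" unfolding S_def by (rule diameter_bounded_bound) auto
          then show ?thesis using ne by (meson dual_order.strict_trans1 zero_less_dist_iff)
        qed
        moreover have "\<forall>(I, \<gamma>) \<in> \<Gamma>. geodesic I \<gamma> \<and> S \<subseteq> \<gamma> ` I"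
        proof (rule ballI)
          fix x assume "x \<in> \<Gamma>"
          then obtain y where y: "y \<in> U" and x: "x = (UNIV, st y)" unfolding \<Gamma>_def by blast
          have "geodesic UNIV (st y) \<and> S \<subseteq> st y ` UNIV"
          proof (cases "dist q1 y = dist q1 q2 + dist q2 y")
            case True
            then show ?thesis unfolding st_def S_def using step3_geo[OF True] step3_image[of q1 q2 y] by simp
          next
            case False
            have "\<bar>dist y q1 - dist y q2\<bar> = dist q1 q2" using y unfolding U_def UU_def by simp
            then have c2: "dist q2 y = dist q2 q1 + dist q1 y" using False
              by (auto simp: dist_commute abs_if split: if_splits)
            then show ?thesis unfolding st_def S_def using False step3_geo[OF c2] step3_image[of q2 q1 y] by auto
          qed
          then show "case x of (I, \<gamma>) \<Rightarrow> geodesic I \<gamma> \<and> S \<subseteq> \<gamma> ` I" using x by simp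
        qed
        moreover have "U \<subseteq> (\<Union>(I, \<gamma>) \<in> \<Gamma>. \<gamma> ` I)"
        proof
          fix y assume y: "y \<in> U"
          have "y \<in> st y ` UNIV" unfolding st_def using step3_image[of q1 q2 y] step3_image[of q2 q1 y] by auto
          then show "y \<in> (\<Union>(I, \<gamma>) \<in> \<Gamma>. \<gamma> ` I)" using y unfolding \<Gamma>_def by auto
        qed
        ultimately show False using hyp by blast
      qed
    qed
  next
    assume hyp: "non_branching TYPE('a) \<and>
            (\<nexists>I \<gamma>. geodesic I \<gamma> \<and> prob_space.prob P {\<omega> \<in> space P. Y \<omega> \<in> \<gamma> ` I} = 1)"
    show "\<exists>!q. q \<in> frechet_median_set P Y x0"
    proof (rule ex1I[of _ z])
      show "z \<in> frechet_median_set P Y x0" by (rule ex)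
      fix q2 assume q2: "q2 \<in> frechet_median_set P Y x0"
      show "q2 = z"
      proof (rule ccontr)
        assume "q2 \<noteq> z"
        then have ne: "z \<noteq> q2" by simp
        obtain I \<gamma> where g: "geodesic I \<gamma>" and im: "\<gamma> ` I = UU z q2"
          using U_line[OF H _ ne] hyp unfolding UU_def by blast
        have "prob_space.prob P {\<omega> \<in> space P. Y \<omega> \<in> \<gamma> ` I} = 1"
          using im two[OF ex q2] by simp
        then show False using hyp g by blast
      qed
    qed
  qed
qed

end
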